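(* Let $\mathcal{K}=(\mathcal{R},\mathcal{T})$ be an ME-consistent $\mathcal{ALCP}$ knowledge base over $\mathcal{L}$, $C,D$ concepts and $\kappa\in\mathcal{L}$ with $P^{ME}_{\mathcal{R}}(\kappa)>0$. For every $\mathcal{ALCP}$-model $\mathcal{P}$ of $\mathcal{K}$ there exist pithy $\mathcal{ALCP}$-models $\mathcal{Q}_1,\mathcal{Q}_2$ of $\mathcal{K}$ such that $\Pr_{\mathcal{Q}_1}(C\sqsubseteq D\mid\kappa)\le\Pr_{\mathcal{P}}(C\sqsubseteq D\mid\kappa)\le\Pr_{\mathcal{Q}_2}(C\sqsubseteq D\mid\kappa)$ and $P^{\mathcal{P}}=P^{\mathcal{Q}_1}=P^{\mathcal{Q}_2}$.
   Context: $\mathcal{L}$ is a propositional language over a finite set of variables; $\mathrm{Int}(\mathcal{L})$ is the set of truth assignments. A probability distribution over $\mathcal{L}$ is $P:\mathrm{Int}(\mathcal{L})\to[0,1]$ summing to $1$, with $P(\phi)=\sum_{v\models\phi}P(v)$. A probabilistic constraint is $c_0+\sum_{i=1}^k c_i\,\mathsf{p}(\phi_i)\ge 0$ ($c_i\in\mathbb{R}$, $\phi_i\in\mathcal{L}$), satisfied by $P$ iff $c_0+\sum_ic_iP(\phi_i)\ge0$; $\mathrm{Mod}(\mathcal{R})$ is the set of distributions satisfying all constraints in $\mathcal{R}$; for consistent $\mathcal{R}$, $P^{ME}_{\mathcal{R}}$ is the unique maximizer in $\mathrm{Mod}(\mathcal{R})$ of $H(P)=-\sum_vP(v)\log P(v)$.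 Concepts: $C::=A\mid\neg C\mid C\sqcap C\mid\exists r.C$. An $\mathcal{L}$-GCI is $\langle C\sqsubseteq D:\kappa\rangle$, $\kappa\in\mathcal{L}$; an $\mathcal{L}$-TBox is a finite set of them; a KB is $\mathcal{K}=(\mathcal{R},\mathcal{T})$. A possible world $\mathcal{I}=(\Delta^{\mathcal{I}},\cdot^{\mathcal{I}},v^{\mathcal{I}})$ is a classical $\mathcal{ALC}$ interpretation together with $v^{\mathcal{I}}\in\mathrm{Int}(\mathcal{L})$; it models $\langle C\sqsubseteq D:\kappa\rangle$ iff $v^{\mathcal{I}}\not\models\kappa$ or $C^{\mathcal{I}}\subseteq D^{\mathcal{I}}$. An $\mathcal{ALCP}$-interpretation $\mathcal{P}=(\mathfrak{I},P_{\mathfrak{I}})$ is a nonempty finite set of possible worlds with a probability distribution on it; $P^{\mathcal{P}}(v)=\sum_{\mathcal{I}\in\mathfrak{I},v^{\mathcal{I}}=v}P_{\mathfrak{I}}(\mathcal{I})$. $\mathcal{P}$ is an $\mathcal{ALCP}$-model of $\mathcal{K}$ iff all its worlds model every GCI of $\mathcal{T}$ and $P^{\mathcal{P}}\in\mathrm{Mod}(\mathcal{R})$; it is an ME-$\mathcal{ALCP}$-model if moreover $P^{\mathcal{P}}=P^{ME}_{\mathcal{R}}$; $\mathcal{K}$ is ME-consistent iff an ME-$\mathcal{ALCP}$-model exists. $\mathcal{P}$ is pithy iff for every $w\in\mathrm{Int}(\mathcal{L})$ there is at most one $\mathcal{I}\in\mathfrak{I}$ with $v^{\mathcal{I}}=w$.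 $\Pr_{\mathcal{P}}(C\sqsubseteq D\mid\kappa)=\big(\sum_{\mathcal{I}\in\mathfrak{I},v^{\mathcal{I}}\models\kappa,C^{\mathcal{I}}\subseteq D^{\mathcal{I}}}P_{\mathfrak{I}}(\mathcal{I})\big)/\big(\sum_{\mathcal{I}\in\mathfrak{I},v^{\mathcal{I}}\models\kappa}P_{\mathfrak{I}}(\mathcal{I})\big)$. *)

theory Defs
  imports Complex_Main
begin

datatype 'v pform = PTrue | PFalse | PVar 'v | PNot "'v pform"
  | PAnd "'v pform" "'v pform" | POr "'v pform" "'v pform" | PImp "'v pform" "'v pform"

type_synonym 'v assignment = "'v \<Rightarrow> bool"   \<comment> \<open>Int(L) = UNIV\<close>

fun psat :: "'v assignment \<Rightarrow> 'v pform \<Rightarrow> bool" where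
  "psat v PTrue = True"
| "psat v PFalse = False"
| "psat v (PVar x) = v x"
| "psat v (PNot f) = (\<not> psat v f)"
| "psat v (PAnd f g) = (psat v f \<and> psat v g)"
| "psat v (POr f g) = (psat v f \<or> psat v g)"
| "psat v (PImp f g) = (psat v f \<longrightarrow> psat v g)"

definition is_distribution :: "('v::finite assignment \<Rightarrow> real) \<Rightarrow> bool" where
  "is_distribution P \<longleftrightarrow> (\<forall>v. 0 \<le> P v \<and> P v \<le> 1) \<and> (\<Sum>v\<in>UNIV. P v) = 1"

definition prob :: "('v::finite assignment \<Rightarrow> real) \<Rightarrow> 'v pform \<Rightarrow> real" where
  "prob P \<phi> = (\<Sum>v\<in>{v. psat v \<phi>}. P v)"

text \<open>Probabilistic constraint c0 + sum_i c_i p(phi_i) >= 0, as (c0, [(c1,phi1),...,(ck,phik)]).\<close>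
type_synonym 'v pconstr = "real \<times> (real \<times> 'v pform) list"

definition sat_constr :: "('v::finite assignment \<Rightarrow> real) \<Rightarrow> 'v pconstr \<Rightarrow> bool" where
  "sat_constr P c \<longleftrightarrow> fst c + (\<Sum>(ci, \<phi>i)\<leftarrow>snd c. ci * prob P \<phi>i) \<ge> 0"

definition Mod :: "'v::finite pconstr set \<Rightarrow> ('v assignment \<Rightarrow> real) set" where
  "Mod R = {P. is_distribution P \<and> (\<forall>c\<in>R. sat_constr P c)}"

definition consistent :: "'v::finite pconstr set \<Rightarrow> bool" where
  "consistent R \<longleftrightarrow> Mod R \<noteq> {}"

text \<open>Entropy; note ln 0 = 0 in Isabelle, giving the convention 0 log 0 = 0.\<close>
definition entropy :: "('v::finite assignment \<Rightarrow> real) \<Rightarrow> real" where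
  "entropy P = - (\<Sum>v\<in>UNIV. P v * ln (P v))"

text \<open>The (unique, for consistent R) maximum-entropy distribution.\<close>
definition PME :: "'v::finite pconstr set \<Rightarrow> ('v assignment \<Rightarrow> real)" where
  "PME R = (THE P. P \<in> Mod R \<and> (\<forall>Q\<in>Mod R. entropy Q \<le> entropy P))"

datatype ('c, 'r) concept = Atom 'c | CNot "('c, 'r) concept"
  | CAnd "('c, 'r) concept" "('c, 'r) concept" | CEx 'r "('c, 'r) concept"

record ('d, 'c, 'r, 'v) world =
  wdom :: "'d set"
  wconc :: "'c \<Rightarrow> 'd set"
  wrole :: "'r \<Rightarrow> ('d \<times> 'd) set"
  wval :: "'v assignment"

definition wf_world :: "('d, 'c, 'r, 'v) world \<Rightarrow> bool" where
  "wf_world I \<longleftrightarrow> wdom I \<noteq> {} \<and> (\<forall>A. wconc I A \<subseteq> wdom I)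
     \<and> (\<forall>r. wrole I r \<subseteq> wdom I \<times> wdom I)"

fun ext :: "('d, 'c, 'r, 'v) world \<Rightarrow> ('c, 'r) concept \<Rightarrow> 'd set" where
  "ext I (Atom A) = wconc I A"
| "ext I (CNot C) = wdom I - ext I C"
| "ext I (CAnd C D) = ext I C \<inter> ext I D"
| "ext I (CEx r C) = {x \<in> wdom I. \<exists>y. (x, y) \<in> wrole I r \<and> y \<in> ext I C}"

type_synonym ('c, 'r, 'v) gci = "('c, 'r) concept \<times> ('c, 'r) concept \<times> 'v pform"

definition world_models_gci :: "('d, 'c, 'r, 'v) world \<Rightarrow> ('c, 'r, 'v) gci \<Rightarrow> bool" where
  "world_models_gci I g = (case g of (C, D, \<kappa>) \<Rightarrow>
      \<not> psat (wval I) \<kappa> \<or> ext I C \<subseteq> ext I D)"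

type_synonym ('c, 'r, 'v) kb = "'v pconstr set \<times> ('c, 'r, 'v) gci set"

definition wf_kb :: "('c, 'r, 'v) kb \<Rightarrow> bool" where
  "wf_kb K \<longleftrightarrow> finite (fst K) \<and> finite (snd K)"

type_synonym ('d, 'c, 'r, 'v) alcp =
  "('d, 'c, 'r, 'v) world set \<times> (('d, 'c, 'r, 'v) world \<Rightarrow> real)"

definition is_alcp :: "('d, 'c, 'r, 'v) alcp \<Rightarrow> bool" where
  "is_alcp \<P> \<longleftrightarrow> (case \<P> of (W, PW) \<Rightarrow>
      finite W \<and> W \<noteq> {} \<and> (\<forall>I\<in>W. wf_world I) \<and>
      (\<forall>I\<in>W. 0 \<le> PW I) \<and> (\<Sum>I\<in>W. PW I) = 1)"

definition dist_of :: "('d, 'c, 'r, 'v) alcp \<Rightarrow> ('v assignment \<Rightarrow> real)" where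
  "dist_of \<P> = (\<lambda>v. \<Sum>I\<in>{I \<in> fst \<P>. wval I = v}. snd \<P> I)"

definition alcp_model :: "('d, 'c, 'r, 'v::finite) alcp \<Rightarrow> ('c, 'r, 'v) kb \<Rightarrow> bool" where
  "alcp_model \<P> K \<longleftrightarrow> is_alcp \<P> \<and>
     (\<forall>I\<in>fst \<P>. \<forall>g\<in>snd K. world_models_gci I g) \<and> dist_of \<P> \<in> Mod (fst K)"

definition me_alcp_model :: "('d, 'c, 'r, 'v::finite) alcp \<Rightarrow> ('c, 'r, 'v) kb \<Rightarrow> bool" where
  "me_alcp_model \<P> K \<longleftrightarrow> alcp_model \<P> K \<and> dist_of \<P> = PME (fst K)"

text \<open>ME-consistency (P^ME_R is only defined for consistent R); the domain type 'd is fixed.\<close>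
definition me_consistent :: "'d itself \<Rightarrow> ('c, 'r, 'v::finite) kb \<Rightarrow> bool" where
  "me_consistent _ K \<longleftrightarrow> consistent (fst K) \<and>
     (\<exists>\<P> :: ('d, 'c, 'r, 'v) alcp. me_alcp_model \<P> K)"

definition pithy :: "('d, 'c, 'r, 'v) alcp \<Rightarrow> bool" where
  "pithy \<P> \<longleftrightarrow> (\<forall>I\<in>fst \<P>. \<forall>J\<in>fst \<P>. wval I = wval J \<longrightarrow> I = J)"

definition cond_pr :: "('d, 'c, 'r, 'v) alcp \<Rightarrow> ('c, 'r) concept \<Rightarrow> ('c, 'r) concept
     \<Rightarrow> 'v pform \<Rightarrow> real" where
  "cond_pr \<P> C D \<kappa> =
     (\<Sum>I\<in>{I \<in> fst \<P>. psat (wval I) \<kappa> \<and> ext I C \<subseteq> ext I D}. snd \<P> I) /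
     (\<Sum>I\<in>{I \<in> fst \<P>. psat (wval I) \<kappa>}. snd \<P> I)"

end

theory Submission
  imports Defs
begin

definition sel :: "('d, 'c, 'r, 'v) world set \<Rightarrow> (('d, 'c, 'r, 'v) world \<Rightarrow> bool) \<Rightarrow> 'v assignment \<Rightarrow> ('d, 'c, 'r, 'v) world" where
  "sel W S v = (if \<exists>I\<in>W. wval I = v \<and> S I then (SOME I. I\<in>W \<and> wval I = v \<and> S I)
                else (SOME I. I\<in>W \<and> wval I = v))"

lemma sel_props:
  assumes "v \<in> wval ` W"
  shows "sel W S v \<in> W" "wval (sel W S v) = v" "(\<exists>I\<in>W. wval I = v \<and> S I) \<Longrightarrow> S (sel W S v)"
proof -
  have A: "sel W S v \<in> W \<and> wval (sel W S v) = v \<and> ((\<exists>I\<in>W. wval I = v \<and> S I) \<longrightarrow> S (sel W S v))"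
  proof (cases "\<exists>I\<in>W. wval I = v \<and> S I")
    case True
    then have "\<exists>I. I\<in>W \<and> wval I = v \<and> S I" by blast
    from someI_ex[OF this] True show ?thesis unfolding sel_def by simp
  next
    case False
    from assms have "\<exists>I. I\<in>W \<and> wval I = v" by blast
    from someI_ex[OF this] False show ?thesis unfolding sel_def by auto
  qed
  then show "sel W S v \<in> W" "wval (sel W S v) = v" "(\<exists>I\<in>W. wval I = v \<and> S I) \<Longrightarrow> S (sel W S v)"
    by auto
qed

lemma sel_inj: "inj_on (sel W S) (wval ` W)"
  by (metis inj_onI sel_props(2))

lemma sum_sel:
  shows "(\<Sum>J\<in>{J \<in> sel W S ` wval ` W. G J}. f (wval J)) = (\<Sum>v\<in>{v\<in>wval ` W. G (sel W S v)}. f v)"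
proof -
  have e: "{J \<in> sel W S ` wval ` W. G J} = sel W S ` {v\<in>wval ` W. G (sel W S v)}" by auto
  have i: "inj_on (sel W S) {v\<in>wval ` W. G (sel W S v)}"
    using sel_inj by (rule inj_on_subset) auto
  show ?thesis unfolding e sum.reindex[OF i]
    by (rule sum.cong) (auto simp: sel_props(2))
qed

lemma main:
  fixes K :: "('c, 'r, 'v::finite) kb" and W :: "('d, 'c, 'r, 'v) world set" and S
  assumes M: "alcp_model (W, PW) K"
  defines "d \<equiv> dist_of (W, PW)"
  defines "Q \<equiv> (sel W S ` wval ` W, \<lambda>I. d (wval I))"
  shows "alcp_model Q K \<and> pithy Q \<and> dist_of Q = d \<and>
    cond_pr Q C D \<kappa> = (\<Sum>v\<in>{v\<in>wval ` W. psat (wval (sel W S v)) \<kappa> \<and> ext (sel W S v) C \<subseteq> ext (sel W S v) D}. d v) /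
        (\<Sum>v\<in>{v\<in>wval ` W. psat v \<kappa>}. d v)"
proof -
  have fW: "finite W" and ne: "W \<noteq> {}" and wf: "\<forall>I\<in>W. wf_world I" and nn: "\<forall>I\<in>W. 0 \<le> PW I"
    and s1: "(\<Sum>I\<in>W. PW I) = 1"
    using M by (auto simp: alcp_model_def is_alcp_def)
  have gci: "\<forall>I\<in>W. \<forall>g\<in>snd K. world_models_gci I g" and md: "d \<in> Mod (fst K)"
    using M by (auto simp: alcp_model_def d_def)
  have dv: "d v = (\<Sum>I\<in>{I\<in>W. wval I = v}. PW I)" for v by (simp add: d_def dist_of_def)
  have dnn: "0 \<le> d v" for v unfolding dv by (rule sum_nonneg) (use nn in auto)
  let ?V = "wval ` W"
  have fV: "finite ?V" using fW by simp
  have sumQ: "(\<Sum>J\<in>sel W S ` ?V. d (wval J)) = 1"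
  proof -
    have "(\<Sum>J\<in>sel W S ` ?V. d (wval J)) = (\<Sum>J\<in>{J \<in> sel W S ` ?V. True}. d (wval J))" by simp
    also have "\<dots> = (\<Sum>v\<in>{v\<in>?V. True}. d v)" by (rule sum_sel)
    also have "\<dots> = (\<Sum>v\<in>?V. (\<Sum>I\<in>{I\<in>W. wval I = v}. PW I))" by (simp add: dv)
    also have "\<dots> = (\<Sum>I\<in>W. PW I)" by (rule sum.group[OF fW fV]) auto
    finally show ?thesis using s1 by simp
  qed
  have dQ: "dist_of Q = d"
  proof
    fix v
    have "dist_of Q v = (\<Sum>J\<in>{J \<in> sel W S ` ?V. wval J = v}. d (wval J))"
      by (simp add: dist_of_def Q_def)
    also have "\<dots> = (\<Sum>u\<in>{u\<in>?V. wval (sel W S u) = v}. d u)" by (rule sum_sel)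
    also have "\<dots> = (\<Sum>u\<in>{u\<in>?V. u = v}. d u)"
      by (rule sum.cong) (auto simp: sel_props(2))
    also have "\<dots> = d v"
    proof (cases "v \<in> ?V")
      case True
      then have "{u\<in>?V. u = v} = {v}" by auto
      then show ?thesis by simp
    next
      case False
      then have e1: "{u\<in>?V. u = v} = {}" and e2: "{I\<in>W. wval I = v} = {}" by auto
      have "d v = 0" unfolding dv e2 by simp
      then show ?thesis unfolding e1 by simp
    qed
    finally show "dist_of Q v = d v" .
  qed
  have aQ: "alcp_model Q K"
    unfolding alcp_model_def
  proof (intro conjI)
    show "dist_of Q \<in> Mod (fst K)" using dQ md by simp
    show "is_alcp Q" unfolding is_alcp_def Q_def
      using fW ne wf dnn sumQ sel_props(1)[of _ W S] by auto
    show "\<forall>I\<in>fst Q. \<forall>g\<in>snd K. world_models_gci I g"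
      unfolding Q_def using gci sel_props(1)[of _ W S] by auto
  qed
  have pQ: "pithy Q" unfolding pithy_def Q_def by (auto simp: sel_props(2))
  have cQ: "cond_pr Q C D \<kappa> = (\<Sum>v\<in>{v\<in>wval ` W. psat (wval (sel W S v)) \<kappa> \<and> ext (sel W S v) C \<subseteq> ext (sel W S v) D}. d v) /
        (\<Sum>v\<in>{v\<in>wval ` W. psat v \<kappa>}. d v)"
  proof -
    have n: "(\<Sum>I\<in>{I \<in> fst Q. psat (wval I) \<kappa> \<and> ext I C \<subseteq> ext I D}. snd Q I) =
      (\<Sum>v\<in>{v\<in>wval ` W. psat (wval (sel W S v)) \<kappa> \<and> ext (sel W S v) C \<subseteq> ext (sel W S v) D}. d v)"
      unfolding Q_def fst_conv snd_conv by (rule sum_sel)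
    have "(\<Sum>I\<in>{I \<in> fst Q. psat (wval I) \<kappa>}. snd Q I) =
      (\<Sum>v\<in>{v\<in>wval ` W. psat (wval (sel W S v)) \<kappa>}. d v)"
      unfolding Q_def fst_conv snd_conv by (rule sum_sel)
    also have "{v\<in>wval ` W. psat (wval (sel W S v)) \<kappa>} = {v\<in>wval ` W. psat v \<kappa>}"
      by (auto simp: sel_props(2))
    finally show ?thesis using n by (simp add: cond_pr_def)
  qed
  show ?thesis using aQ pQ dQ cQ by blast
qed


theorem lemma1:
  fixes K :: "('c, 'r, 'v::finite) kb"
    and C D :: "('c, 'r) concept" and \<kappa> :: "'v pform"
    and \<P> :: "('d, 'c, 'r, 'v) alcp"
  assumes "wf_kb K"
    and "me_consistent TYPE('d) K"
    and "prob (PME (fst K)) \<kappa> > 0"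
    and "alcp_model \<P> K"
  shows "\<exists>(\<Q>1 :: ('d, 'c, 'r, 'v) alcp) (\<Q>2 :: ('d, 'c, 'r, 'v) alcp).
     alcp_model \<Q>1 K \<and> alcp_model \<Q>2 K \<and> pithy \<Q>1 \<and> pithy \<Q>2 \<and>
     cond_pr \<Q>1 C D \<kappa> \<le> cond_pr \<P> C D \<kappa> \<and> cond_pr \<P> C D \<kappa> \<le> cond_pr \<Q>2 C D \<kappa> \<and>
     dist_of \<P> = dist_of \<Q>1 \<and> dist_of \<Q>1 = dist_of \<Q>2"
proof -
  obtain W PW where PE: "\<P> = (W, PW)" by (cases \<P>)
  have M: "alcp_model (W, PW) K" using assms(4) PE by simp
  have fW: "finite W" and nn: "\<forall>I\<in>W. 0 \<le> PW I"
    using M by (auto simp: alcp_model_def is_alcp_def)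
  define d where "d = dist_of (W, PW)"
  have dv: "d v = (\<Sum>I\<in>{I\<in>W. wval I = v}. PW I)" for v by (simp add: d_def dist_of_def)
  have dnn: "0 \<le> d v" for v unfolding dv by (rule sum_nonneg) (use nn in auto)
  define good where "good I \<longleftrightarrow> psat (wval I) \<kappa> \<and> ext I C \<subseteq> ext I D" for I :: "('d, 'c, 'r, 'v) world"
  let ?V = "wval ` W"
  have fV: "finite ?V" using fW by simp
  define n where "n v = (\<Sum>I\<in>{x \<in> {I\<in>W. good I}. wval x = v}. PW I)" for v
  define den where "den = (\<Sum>v\<in>{v\<in>?V. psat v \<kappa>}. d v)"
  have den0: "0 \<le> den" unfolding den_def by (rule sum_nonneg) (use dnn in auto)
  have cP: "cond_pr \<P> C D \<kappa> = (\<Sum>v\<in>?V. n v) / den"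
  proof -
    have fG: "finite {I\<in>W. good I}" using fW by simp
    have a: "(\<Sum>I\<in>{I \<in> W. psat (wval I) \<kappa> \<and> ext I C \<subseteq> ext I D}. PW I) = (\<Sum>v\<in>?V. n v)"
      unfolding n_def good_def[symmetric]
      by (rule sum.group[OF fG fV, symmetric]) auto
    have fK: "finite {I\<in>W. psat (wval I) \<kappa>}" using fW by simp
    have fT: "finite {v\<in>?V. psat v \<kappa>}" using fV by simp
    have "(\<Sum>I\<in>{I \<in> W. psat (wval I) \<kappa>}. PW I) =
       (\<Sum>v\<in>{v\<in>?V. psat v \<kappa>}. (\<Sum>I\<in>{x \<in> {I\<in>W. psat (wval I) \<kappa>}. wval x = v}. PW I))"
      by (rule sum.group[OF fK fT, symmetric]) auto
    also have "\<dots> = den" unfolding den_def dv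
      by (rule sum.cong) (auto intro!: sum.cong)
    finally show ?thesis using a PE by (simp add: cond_pr_def)
  qed
  let ?Q1 = "(sel W (\<lambda>I. \<not> good I) ` ?V, \<lambda>I. d (wval I))"
  let ?Q2 = "(sel W good ` ?V, \<lambda>I. d (wval I))"
  note m1 = main[OF M, of "\<lambda>I. \<not> good I" C D \<kappa>, folded d_def good_def]
  note m2 = main[OF M, of good C D \<kappa>, folded d_def good_def]
  have c1: "cond_pr ?Q1 C D \<kappa> = (\<Sum>v\<in>?V. if good (sel W (\<lambda>I. \<not> good I) v) then d v else 0) / den"
    using m1 unfolding den_def by (simp add: sum.inter_filter[OF fV])
  have c2: "cond_pr ?Q2 C D \<kappa> = (\<Sum>v\<in>?V. if good (sel W good v) then d v else 0) / den"
    using m2 unfolding den_def by (simp add: sum.inter_filter[OF fV])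
  have nle: "n v \<le> d v" for v
    unfolding n_def dv by (rule sum_mono2) (use fW nn in auto)
  have nnn: "0 \<le> n v" for v
    unfolding n_def by (rule sum_nonneg) (use nn in auto)
  have le1: "(\<Sum>v\<in>?V. if good (sel W (\<lambda>I. \<not> good I) v) then d v else 0) \<le> (\<Sum>v\<in>?V. n v)"
  proof (rule sum_mono)
    fix v assume v: "v \<in> ?V"
    show "(if good (sel W (\<lambda>I. \<not> good I) v) then d v else 0) \<le> n v"
    proof (cases "good (sel W (\<lambda>I. \<not> good I) v)")
      case True
      then have "\<forall>I\<in>W. wval I = v \<longrightarrow> good I" using sel_props(3)[OF v, of "\<lambda>I. \<not> good I"] by blast
      then have "{x \<in> {I\<in>W. good I}. wval x = v} = {I\<in>W. wval I = v}" by auto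
      then show ?thesis using True by (simp add: n_def dv)
    qed (simp add: nnn)
  qed
  have le2: "(\<Sum>v\<in>?V. n v) \<le> (\<Sum>v\<in>?V. if good (sel W good v) then d v else 0)"
  proof (rule sum_mono)
    fix v assume v: "v \<in> ?V"
    show "n v \<le> (if good (sel W good v) then d v else 0)"
    proof (cases "good (sel W good v)")
      case False
      then have "\<forall>I\<in>W. wval I = v \<longrightarrow> \<not> good I" using sel_props(3)[OF v, of good] by blast
      then have "{x \<in> {I\<in>W. good I}. wval x = v} = {}" by auto
      then have "n v = 0" unfolding n_def by (metis sum.empty)
      then show ?thesis using False by simp
    qed (simp add: nle)
  qed
  show ?thesis
  proof (intro exI conjI)
    show "alcp_model ?Q1 K" "pithy ?Q1" "alcp_model ?Q2 K" "pithy ?Q2" using m1 m2 by blast+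
    show "dist_of \<P> = dist_of ?Q1" "dist_of ?Q1 = dist_of ?Q2" using m1 m2 PE d_def by simp_all
    show "cond_pr ?Q1 C D \<kappa> \<le> cond_pr \<P> C D \<kappa>" unfolding c1 cP
      by (rule divide_right_mono[OF le1 den0])
    show "cond_pr \<P> C D \<kappa> \<le> cond_pr ?Q2 C D \<kappa>" unfolding c2 cP
      by (rule divide_right_mono[OF le2 den0])
  qed
qed

end
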